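(* In the setting described in the context, let $K=\max_{i\in\{1,2\}}\|w^{(i)}_0\|$ and let $T=\sum_{t=1}^N \tau_t$ be the number of updates performed by the Update-by-Disagreement perceptron over $N$ iterations. Then $$\mathbb{E}[T]\;\le\;\frac{3\,(4K+1)}{(1-2\mu)^2}\,\|w^*\|^2,$$ where the expectation is over the random samples $(x_t,y_t)$ and the random label flips $\theta_t$.
   Context: Let $\mathcal{X}=\{x\in\mathbb{R}^d:\|x\|\le 1\}$ and $\mathcal{Y}=\{\pm1\}$. Let $\mathcal{D}$ be a probability distribution over $\mathcal{X}\times\mathcal{Y}$ for which there exists $w^*\in\mathbb{R}^d$ with $\mathcal{D}(\{(x,y): y\langle w^*,x\rangle<1\})=0$. Fix $\mu\in[0,1/2)$. Let $(x_1,y_1),\dots,(x_N,y_N)$ be i.i.d. samples from $\mathcal{D}$, and let $\theta_1,\dots,\theta_N$ be i.i.d. random variables, independent of the samples, with $\Pr[\theta_t=1]=1-\mu$ and $\Pr[\theta_t=-1]=\mu$; the observed (noisy) label is $\tilde y_t=\theta_t y_t$. The Update-by-Disagreement perceptron starts from fixed initial vectors $w^{(1)}_0,w^{(2)}_0\in\mathbb{R}^d$ and for $t=1,\dots,N$ sets $\tau_t=1$ if $\mathrm{sign}(\langle w^{(1)}_{t-1},x_t\rangle)\neq\mathrm{sign}(\langle w^{(2)}_{t-1},x_t\rangle)$ and $\tau_t=0$ otherwise, and then updates $w^{(i)}_t=w^{(i)}_{t-1}+\tau_t\,\tilde y_t\,x_t$ for $i=1,2$. Here $\mathrm{sign}(z)=+1$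 for $z>0$, $-1$ for $z<0$, and its value at $0$ is some fixed convention. *)

theory Defs
  imports "HOL-Probability.Probability"
begin

definition flip_pmf :: "real \<Rightarrow> real pmf" where
  "flip_pmf \<mu> = map_pmf (\<lambda>b. if b then -1 else 1) (bernoulli_pmf \<mu>)"

definition sgn_conv :: "real \<Rightarrow> real \<Rightarrow> real" where
  "sgn_conv c z = (if z > 0 then 1 else if z < 0 then -1 else c)"

text \<open>State (w1_t, w2_t) of the Update-by-Disagreement perceptron after t steps.
  The sample sequence s gives at (0-based) index t the triple ((x_{t+1}, y_{t+1}), theta_{t+1}).\<close>
fun ubd_state :: "real \<Rightarrow> 'a::real_inner \<Rightarrow> 'a \<Rightarrow> (nat \<Rightarrow> ('a \<times> real) \<times> real) \<Rightarrow> nat \<Rightarrow> 'a \<times> 'a" where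
  "ubd_state c w1 w2 s 0 = (w1, w2)"
| "ubd_state c w1 w2 s (Suc t) =
     (let (a, b) = ubd_state c w1 w2 s t;
          ((x, y), \<theta>) = s t
      in if sgn_conv c (inner a x) \<noteq> sgn_conv c (inner b x)
         then (a + (\<theta> * y) *\<^sub>R x, b + (\<theta> * y) *\<^sub>R x)
         else (a, b))"

text \<open>Update indicator tau_{t+1} (0-based index t).\<close>
definition ubd_tau :: "real \<Rightarrow> 'a::real_inner \<Rightarrow> 'a \<Rightarrow> (nat \<Rightarrow> ('a \<times> real) \<times> real) \<Rightarrow> nat \<Rightarrow> nat" where
  "ubd_tau c w1 w2 s t =
     (let (a, b) = ubd_state c w1 w2 s t; x = fst (fst (s t))
      in if sgn_conv c (inner a x) \<noteq> sgn_conv c (inner b x) then 1 else 0)"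

definition ubd_updates :: "real \<Rightarrow> 'a::real_inner \<Rightarrow> 'a \<Rightarrow> (nat \<Rightarrow> ('a \<times> real) \<times> real) \<Rightarrow> nat \<Rightarrow> nat" where
  "ubd_updates c w1 w2 s N = (\<Sum>t<N. ubd_tau c w1 w2 s t)"

end

theory Submission imports Defs begin

lemma ubd_state_Suc':
  "ubd_state c w1 w2 s (Suc t) =
     (if sgn_conv c (inner (fst (ubd_state c w1 w2 s t)) (fst (fst (s t)))) \<noteq> sgn_conv c (inner (snd (ubd_state c w1 w2 s t)) (fst (fst (s t))))
      then (fst (ubd_state c w1 w2 s t) + (snd (s t) * snd (fst (s t))) *\<^sub>R fst (fst (s t)),
            snd (ubd_state c w1 w2 s t) + (snd (s t) * snd (fst (s t))) *\<^sub>R fst (fst (s t)))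
      else ubd_state c w1 w2 s t)"
  by (simp add: Let_def split: prod.splits)

declare ubd_state.simps(2)[simp del]

lemma ubd_tau':
  "ubd_tau c w1 w2 s t = (if sgn_conv c (inner (fst (ubd_state c w1 w2 s t)) (fst (fst (s t)))) \<noteq> sgn_conv c (inner (snd (ubd_state c w1 w2 s t)) (fst (fst (s t)))) then 1 else 0)"
  by (simp add: ubd_tau_def Let_def split: prod.splits)

lemma ubd_inv: "snd (ubd_state c w1 w2 s t) = fst (ubd_state c w1 w2 s t) - w1 + w2"
  by (induction t) (auto simp: ubd_state_Suc' algebra_simps)

lemma ubd_local: "(\<And>i. i < t \<Longrightarrow> s i = s' i) \<Longrightarrow> ubd_state c w1 w2 s t = ubd_state c w1 w2 s' t"
  by (induction t) (auto simp: ubd_state_Suc')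

lemma ubd_updates_Suc: "ubd_updates c w1 w2 s (Suc t) = ubd_updates c w1 w2 s t + ubd_tau c w1 w2 s t"
  by (simp add: ubd_updates_def)

lemma ubd_updates_local: "(\<And>i. i < t \<Longrightarrow> s i = s' i) \<Longrightarrow> ubd_updates c w1 w2 s t = ubd_updates c w1 w2 s' t"
proof -
  assume h: "\<And>i. i < t \<Longrightarrow> s i = s' i"
  have "ubd_tau c w1 w2 s i = ubd_tau c w1 w2 s' i" if "i < t" for i
    using that h ubd_local[of i s s' c w1 w2] by (simp add: ubd_tau')
  then show ?thesis by (simp add: ubd_updates_def)
qed

lemma disagree_bound:
  fixes U x w1 w2 :: "'a::real_inner"
  assumes "sgn_conv c (inner (w1 + U) x) \<noteq> sgn_conv c (inner (w2 + U) x)"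
  shows "\<bar>inner U x\<bar> \<le> max (norm w1) (norm w2) * norm x"
proof -
  have A: "\<bar>inner w1 x\<bar> \<le> norm w1 * norm x" "\<bar>inner w2 x\<bar> \<le> norm w2 * norm x"
    by (simp_all add: Cauchy_Schwarz_ineq2)
  have "norm w1 * norm x \<le> max (norm w1) (norm w2) * norm x" "norm w2 * norm x \<le> max (norm w1) (norm w2) * norm x"
    by (simp_all add: mult_right_mono)
  moreover have "(inner (w1 + U) x \<le> 0 \<and> inner (w2 + U) x \<ge> 0) \<or> (inner (w1 + U) x \<ge> 0 \<and> inner (w2 + U) x \<le> 0)"
    using assms unfolding sgn_conv_def by (auto split: if_splits)
  ultimately show ?thesis using A by (auto simp: inner_add_left)
qed

definition Qf :: "real \<Rightarrow> 'a::real_inner \<Rightarrow> 'a \<Rightarrow> real" where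
  "Qf lam w U = (norm w)^2 / (2*lam) - inner U w + lam/2 * (norm U)^2"

lemma Qf_nonneg: assumes "lam > 0" shows "Qf lam w U \<ge> 0"
proof -
  have "inner U w \<le> norm U * norm w" by (rule Cauchy_Schwarz_ineq2[THEN abs_le_D1])
  moreover have "0 \<le> (lam * norm U - norm w)^2" by simp
  hence "2 * lam * (norm U * norm w) \<le> lam^2 * (norm U)^2 + (norm w)^2"
    by (simp add: power2_diff power_mult_distrib algebra_simps)
  hence "norm U * norm w \<le> (norm w)^2 / (2*lam) + lam/2 * (norm U)^2"
    using assms by (simp add: field_simps power2_eq_square)
  ultimately show ?thesis unfolding Qf_def by linarith
qed

lemma Qf_step:
  "Qf lam w (U + a *\<^sub>R x) = Qf lam w U - a * inner x w + lam/2 * (2 * a * inner U x + a^2 * (norm x)^2)"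
proof -
  have "(norm (U + a *\<^sub>R x))^2 = (norm U)^2 + 2 * a * inner U x + a^2 * (norm x)^2"
    unfolding power2_norm_eq_inner by (simp add: inner_add_left inner_add_right inner_commute algebra_simps power2_eq_square)
  then show ?thesis unfolding Qf_def by (simp add: inner_add_left algebra_simps)
qed

lemma lin_aux: "(a::real) \<le> lam * e * K \<Longrightarrow> B \<le> lam / 2 \<Longrightarrow> e \<le> e * g \<Longrightarrow> lam * e * K + lam/2 \<le> e/2 \<Longrightarrow> L = Q - e * g + a + B \<Longrightarrow> L + e/2 \<le> Q"
  by linarith

lemma step_ineq:
  fixes U x w :: "'a::real_inner"
  assumes nx: "norm x \<le> 1" and y: "y \<in> {-1, 1}" and g: "y * inner w x \<ge> 1"
    and bU: "\<bar>inner U x\<bar> \<le> K * norm x" and K: "K \<ge> 0"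
    and mu: "0 \<le> \<mu>" "\<mu> < 1/2"
    and lam: "lam = (1 - 2*\<mu>) / (2*K+1)"
  shows "(1-\<mu>) * Qf lam w (U + y *\<^sub>R x) + \<mu> * Qf lam w (U + (-y) *\<^sub>R x) + (1 - 2*\<mu>)/2 \<le> Qf lam w U"
proof -
  have y2: "y^2 = 1" using y by auto
  have yy: "(-y)^2 = 1" using y by auto
  define g where "g = y * inner x w"
  define h where "h = y * inner U x"
  have g1: "g \<ge> 1" using g by (simp add: g_def inner_commute)
  have hK: "h \<le> K" proof -
    have "\<bar>h\<bar> = \<bar>inner U x\<bar>" using y by (auto simp: h_def)
    also have "\<dots> \<le> K * norm x" by (rule bU)
    also have "\<dots> \<le> K" using K nx by (simp add: mult_left_le)
    finally show ?thesis by simp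
  qed
  have nx2: "(norm x)^2 \<le> 1" using nx by (simp add: power_le_one)
  have lam0: "lam \<ge> 0" using lam mu K by simp
  have e: "(1-\<mu>) * Qf lam w (U + y *\<^sub>R x) + \<mu> * Qf lam w (U + (-y) *\<^sub>R x)
      = Qf lam w U - (1 - 2*\<mu>) * g + lam * (1 - 2*\<mu>) * h + lam/2 * (norm x)^2"
    unfolding Qf_step y2 yy g_def h_def by (simp add: field_simps)
  have "lam * (1 - 2*\<mu>) * h \<le> lam * (1 - 2*\<mu>) * K"
    using hK lam0 mu by (intro mult_left_mono) auto
  moreover have "lam/2 * (norm x)^2 \<le> lam/2" using lam0 nx2 by (simp add: mult_left_le)
  moreover have "(1 - 2*\<mu>) * g \<ge> (1 - 2*\<mu>)" using g1 mu by simp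
  moreover have "lam * (1 - 2*\<mu>) * K + lam/2 \<le> (1 - 2*\<mu>)/2"
  proof -
    have "(1 - 2*\<mu>) * K \<le> K" using K mu by (simp add: mult_left_le_one_le)
    hence "lam * ((1 - 2*\<mu>) * K) \<le> lam * K" using lam0 by (rule mult_left_mono)
    hence "lam * (1 - 2*\<mu>) * K \<le> lam * K" by (simp add: mult.assoc)
    also have "lam * K + lam/2 = (1 - 2*\<mu>)/2" using lam K by (simp add: field_simps)
    ultimately show ?thesis by linarith
  qed
  ultimately show ?thesis using e by (rule lin_aux)
qed

lemma Qf_meas: "f \<in> borel_measurable M \<Longrightarrow> (\<lambda>s. Qf lam w (f s :: 'a::euclidean_space)) \<in> borel_measurable M"
  unfolding Qf_def
  by (intro borel_measurable_add borel_measurable_diff borel_measurable_inner borel_measurable_times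
      borel_measurable_power borel_measurable_norm measurable_const) (auto simp: borel_measurable_const)

lemma sgn_conv_meas[measurable]: "sgn_conv c \<in> borel_measurable borel"
  unfolding sgn_conv_def by measurable

definition Gf :: "real \<Rightarrow> 'a::real_inner \<Rightarrow> 'a \<Rightarrow> real \<Rightarrow> 'a \<Rightarrow> real \<Rightarrow> 'a \<Rightarrow> real \<Rightarrow> ('a \<times> real) \<times> real \<Rightarrow> real" where
  "Gf c w1 w2 lam w kap U k z = (if sgn_conv c (inner (w1+U) (fst (fst z))) \<noteq> sgn_conv c (inner (w2+U) (fst (fst z)))
     then Qf lam w (U + (snd z * snd (fst z)) *\<^sub>R fst (fst z)) + kap*(k+1) else Qf lam w U + kap*k)"

definition Rf :: "real \<Rightarrow> 'a::real_inner \<Rightarrow> 'a \<Rightarrow> real \<Rightarrow> 'a \<Rightarrow> real \<Rightarrow> (nat \<Rightarrow> ('a \<times> real) \<times> real) \<Rightarrow> nat \<Rightarrow> real" where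
  "Rf c w1 w2 lam w kap s n = Qf lam w (fst (ubd_state c w1 w2 s n) - w1) + kap * real (ubd_updates c w1 w2 s n)"

context
  fixes D :: "('a::euclidean_space \<times> real) measure" and p :: "real pmf"
  assumes sD: "sets D = sets borel"
begin

lemma mD_fst: "(\<lambda>z. fst z) \<in> borel_measurable D"
  by (subst measurable_cong_sets[OF sD refl], subst borel_prod[symmetric]) measurable

lemma mD_snd: "(\<lambda>z. snd z) \<in> borel_measurable D"
  by (subst measurable_cong_sets[OF sD refl], subst borel_prod[symmetric]) measurable

lemma mfx[measurable]: "(\<lambda>z. fst (fst z)) \<in> borel_measurable (D \<Otimes>\<^sub>M measure_pmf p)"
  by (rule measurable_compose[OF measurable_fst mD_fst])

lemma mfy[measurable]: "(\<lambda>z. snd (fst z)) \<in> borel_measurable (D \<Otimes>\<^sub>M measure_pmf p)"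
  by (rule measurable_compose[OF measurable_fst mD_snd])

lemma mth[measurable]: "(\<lambda>z. snd z) \<in> borel_measurable (D \<Otimes>\<^sub>M measure_pmf p)"
  by (rule measurable_compose[OF measurable_snd]) simp

lemma Gf_meas[measurable]: "(\<lambda>z. Gf c w1 w2 lam w kap U k z) \<in> borel_measurable (D \<Otimes>\<^sub>M measure_pmf p)"
  unfolding Gf_def Qf_def by measurable

lemma inner_bound:
  assumes "prob_space D"
    and ae: "AE z in D. norm (fst z) \<le> 1 \<and> snd z \<in> {-1, 1}"
    and nul: "emeasure D {z. snd z * inner w (fst z) < 1} = 0"
    and mu: "0 \<le> \<mu>" "\<mu> < 1/2"
    and K: "K = max (norm w1) (norm w2)"
    and lam: "lam = (1 - 2*\<mu>) / (2*K+1)" and kap: "kap = (1 - 2*\<mu>)/2"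
    and k: "k \<ge> 0"
  shows "(\<integral>\<^sup>+ z. ennreal (Gf c w1 w2 lam w kap U k z) \<partial>(D \<Otimes>\<^sub>M measure_pmf (flip_pmf \<mu>)))
          \<le> ennreal (Qf lam w U + kap * k)"
proof -
  interpret D: prob_space D by fact
  interpret P: prob_space "measure_pmf (flip_pmf \<mu>)" by (rule prob_space_measure_pmf)
  let ?f = "\<lambda>z. ennreal (Gf c w1 w2 lam w kap U k z)"
  have K0: "K \<ge> 0" using K by (simp add: le_max_iff_disj)
  have lam0: "lam > 0" using lam mu K0 by simp
  have kap0: "kap \<ge> 0" using kap mu by simp
  have Gnn: "Gf c w1 w2 lam w kap U k z \<ge> 0" for z
    unfolding Gf_def using Qf_nonneg[OF lam0] kap0 k by (auto intro!: add_nonneg_nonneg mult_nonneg_nonneg)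
  have "(\<integral>\<^sup>+ z. ?f z \<partial>(D \<Otimes>\<^sub>M measure_pmf (flip_pmf \<mu>))) = (\<integral>\<^sup>+ x. \<integral>\<^sup>+ t. ?f (x, t) \<partial>measure_pmf (flip_pmf \<mu>) \<partial>D)"
    by (rule measure_pmf.nn_integral_fst[symmetric]) measurable
  also have "\<dots> = (\<integral>\<^sup>+ x. ennreal ((1-\<mu>) * Gf c w1 w2 lam w kap U k (x, 1) + \<mu> * Gf c w1 w2 lam w kap U k (x, -1)) \<partial>D)"
  proof (intro nn_integral_cong)
    fix x
    have "(\<integral>\<^sup>+ t. ?f (x, t) \<partial>measure_pmf (flip_pmf \<mu>)) = (\<integral>\<^sup>+ b. ?f (x, if b then -1 else 1) \<partial>measure_pmf (bernoulli_pmf \<mu>))"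
      by (simp add: flip_pmf_def)
    also have "\<dots> = (\<Sum>b\<in>UNIV. ?f (x, if b then -1 else 1) * pmf (bernoulli_pmf \<mu>) b)"
      by (rule nn_integral_measure_pmf_support) auto
    also have "\<dots> = ?f (x, -1) * ennreal \<mu> + ?f (x, 1) * ennreal (1 - \<mu>)"
      using mu by (simp add: UNIV_bool)
    also have "\<dots> = ennreal ((1-\<mu>) * Gf c w1 w2 lam w kap U k (x, 1) + \<mu> * Gf c w1 w2 lam w kap U k (x, -1))"
    proof -
      have a: "Gf c w1 w2 lam w kap U k (x, 1) \<ge> 0" "Gf c w1 w2 lam w kap U k (x, -1) \<ge> 0" using Gnn by auto
      have "?f (x, -1) * ennreal \<mu> + ?f (x, 1) * ennreal (1 - \<mu>)
           = ennreal (Gf c w1 w2 lam w kap U k (x, -1) * \<mu>) + ennreal (Gf c w1 w2 lam w kap U k (x, 1) * (1-\<mu>))"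
        using a mu by (simp add: ennreal_mult)
      also have "\<dots> = ennreal (Gf c w1 w2 lam w kap U k (x, -1) * \<mu> + Gf c w1 w2 lam w kap U k (x, 1) * (1-\<mu>))"
        using a mu by (intro ennreal_plus[symmetric]) auto
      finally show ?thesis by (simp add: algebra_simps)
    qed
    finally show "(\<integral>\<^sup>+ t. ?f (x, t) \<partial>measure_pmf (flip_pmf \<mu>)) = \<dots>" .
  qed
  also have "\<dots> \<le> (\<integral>\<^sup>+ x. ennreal (Qf lam w U + kap * k) \<partial>D)"
  proof (rule nn_integral_mono_AE)
    have "{z. snd z * inner w (fst z) < 1} \<in> sets D"
    proof -
      have "{z \<in> space D. snd z * inner w (fst z) < 1} \<in> sets D"
        using mD_fst mD_snd by measurable
      moreover have "space D = UNIV" using sets_eq_imp_space_eq[OF sD] by simp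
      ultimately show ?thesis by simp
    qed
    hence "{z. snd z * inner w (fst z) < 1} \<in> null_sets D" using nul by (simp add: null_setsI)
    hence ae2: "AE z in D. snd z * inner w (fst z) \<ge> 1"
      by (rule AE_I') auto
    show "AE x in D. ennreal ((1-\<mu>) * Gf c w1 w2 lam w kap U k (x, 1) + \<mu> * Gf c w1 w2 lam w kap U k (x, -1)) \<le> ennreal (Qf lam w U + kap * k)"
      using ae ae2
    proof eventually_elim
      case (elim z)
      obtain xx y where z: "z = (xx, y)" by (cases z)
      show ?case
      proof (cases "sgn_conv c (inner (w1+U) xx) \<noteq> sgn_conv c (inner (w2+U) xx)")
        case True
        have bU: "\<bar>inner U xx\<bar> \<le> K * norm xx" using disagree_bound[OF True] K by simp
        have "(1-\<mu>) * Qf lam w (U + y *\<^sub>R xx) + \<mu> * Qf lam w (U + (-y) *\<^sub>R xx) + (1 - 2*\<mu>)/2 \<le> Qf lam w U"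
          using elim z by (intro step_ineq[OF _ _ _ bU K0 mu lam]) (auto simp: inner_commute)
        note ineq = this
        have G1: "Gf c w1 w2 lam w kap U k (z, 1) = Qf lam w (U + y *\<^sub>R xx) + kap*(k+1)"
          using True z by (simp add: Gf_def)
        have G2: "Gf c w1 w2 lam w kap U k (z, -1) = Qf lam w (U + (-y) *\<^sub>R xx) + kap*(k+1)"
          using True z by (simp add: Gf_def)
        have E: "(1-\<mu>) * (Qf lam w (U + y *\<^sub>R xx) + kap*(k+1)) + \<mu> * (Qf lam w (U + (-y) *\<^sub>R xx) + kap*(k+1))
           = ((1-\<mu>) * Qf lam w (U + y *\<^sub>R xx) + \<mu> * Qf lam w (U + (-y) *\<^sub>R xx)) + kap + kap * k"
          by (simp add: algebra_simps)
        show ?thesis unfolding G1 G2 E using ineq kap by (intro ennreal_leI) linarith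
      next
        case False
        then show ?thesis using z by (intro ennreal_leI) (simp add: Gf_def algebra_simps)
      qed
    qed
  qed
  also have "\<dots> = ennreal (Qf lam w U + kap * k)"
    by (simp add: D.emeasure_space_1)
  finally show ?thesis .
qed

lemma Rf_Suc: "Rf c w1 w2 lam w kap s (Suc n) = Gf c w1 w2 lam w kap (fst (ubd_state c w1 w2 s n) - w1) (real (ubd_updates c w1 w2 s n)) (s n)"
  unfolding Rf_def Gf_def ubd_updates_Suc ubd_tau' ubd_state_Suc'
  by (simp add: ubd_inv algebra_simps)

lemma ubd_fst_Suc:
  "fst (ubd_state c w1 w2 s (Suc t)) =
     (if sgn_conv c (inner (fst (ubd_state c w1 w2 s t)) (fst (fst (s t)))) \<noteq> sgn_conv c (inner (fst (ubd_state c w1 w2 s t) - w1 + w2) (fst (fst (s t))))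
      then fst (ubd_state c w1 w2 s t) + (snd (s t) * snd (fst (s t))) *\<^sub>R fst (fst (s t))
      else fst (ubd_state c w1 w2 s t))"
  by (simp add: ubd_state_Suc' ubd_inv[symmetric])

lemma real_updates:
  "real (ubd_updates c w1 w2 s n) = (\<Sum>t<n. if sgn_conv c (inner (fst (ubd_state c w1 w2 s t)) (fst (fst (s t)))) \<noteq> sgn_conv c (inner (fst (ubd_state c w1 w2 s t) - w1 + w2) (fst (fst (s t)))) then 1 else 0)"
  unfolding ubd_updates_def of_nat_sum by (intro sum.cong) (auto simp: ubd_tau' ubd_inv)

lemma comp_fx[measurable]: "t \<in> I \<Longrightarrow> (\<lambda>s. fst (fst (s t))) \<in> borel_measurable (PiM I (\<lambda>_. D \<Otimes>\<^sub>M measure_pmf p))"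
  by (rule measurable_compose[OF measurable_component_singleton[of t I "\<lambda>_. D \<Otimes>\<^sub>M measure_pmf p"] mfx])
lemma comp_fy[measurable]: "t \<in> I \<Longrightarrow> (\<lambda>s. snd (fst (s t))) \<in> borel_measurable (PiM I (\<lambda>_. D \<Otimes>\<^sub>M measure_pmf p))"
  by (rule measurable_compose[OF measurable_component_singleton[of t I "\<lambda>_. D \<Otimes>\<^sub>M measure_pmf p"] mfy])
lemma comp_th[measurable]: "t \<in> I \<Longrightarrow> (\<lambda>s. snd (s t)) \<in> borel_measurable (PiM I (\<lambda>_. D \<Otimes>\<^sub>M measure_pmf p))"
  by (rule measurable_compose[OF measurable_component_singleton[of t I "\<lambda>_. D \<Otimes>\<^sub>M measure_pmf p"] mth])

lemma state_meas:
  "{..<t} \<subseteq> I \<Longrightarrow> (\<lambda>s. fst (ubd_state c w1 w2 s t)) \<in> borel_measurable (PiM I (\<lambda>_. D \<Otimes>\<^sub>M measure_pmf p))"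
proof (induction t)
  case 0
  then show ?case by simp
next
  case (Suc t)
  have "{..<t} \<subseteq> I" using Suc.prems by auto
  then have IH: "(\<lambda>s. fst (ubd_state c w1 w2 s t)) \<in> borel_measurable (PiM I (\<lambda>_. D \<Otimes>\<^sub>M measure_pmf p))"
    by (rule Suc.IH)
  have tI: "t \<in> I" using Suc.prems by auto
  note x = comp_fx[OF tI] and y = comp_fy[OF tI] and th = comp_th[OF tI]
  have b: "(\<lambda>s. fst (ubd_state c w1 w2 s t) - w1 + w2) \<in> borel_measurable (PiM I (\<lambda>_. D \<Otimes>\<^sub>M measure_pmf p))"
    by (intro borel_measurable_add borel_measurable_diff IH measurable_const) simp_all
  have g1: "(\<lambda>s. sgn_conv c (inner (fst (ubd_state c w1 w2 s t)) (fst (fst (s t))))) \<in> borel_measurable (PiM I (\<lambda>_. D \<Otimes>\<^sub>M measure_pmf p))"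
    by (rule measurable_compose[OF borel_measurable_inner[OF IH x] sgn_conv_meas])
  have g2: "(\<lambda>s. sgn_conv c (inner (fst (ubd_state c w1 w2 s t) - w1 + w2) (fst (fst (s t))))) \<in> borel_measurable (PiM I (\<lambda>_. D \<Otimes>\<^sub>M measure_pmf p))"
    by (rule measurable_compose[OF borel_measurable_inner[OF b x] sgn_conv_meas])
  have u: "(\<lambda>s. fst (ubd_state c w1 w2 s t) + (snd (s t) * snd (fst (s t))) *\<^sub>R fst (fst (s t))) \<in> borel_measurable (PiM I (\<lambda>_. D \<Otimes>\<^sub>M measure_pmf p))"
    by (intro borel_measurable_add IH borel_measurable_scaleR borel_measurable_times th y x)
  show ?case unfolding ubd_fst_Suc by (rule measurable_If[OF u IH borel_measurable_neq[OF g1 g2]])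
qed

lemma dis_pred:
  assumes st: "{..<t} \<subseteq> I" and tI: "t \<in> I"
  shows "Measurable.pred (PiM I (\<lambda>_. D \<Otimes>\<^sub>M measure_pmf p)) (\<lambda>s. sgn_conv c (inner (fst (ubd_state c w1 w2 s t)) (fst (fst (s t)))) \<noteq> sgn_conv c (inner (fst (ubd_state c w1 w2 s t) - w1 + w2) (fst (fst (s t)))))"
proof -
  have IH: "(\<lambda>s. fst (ubd_state c w1 w2 s t)) \<in> borel_measurable (PiM I (\<lambda>_. D \<Otimes>\<^sub>M measure_pmf p))"
    using st by (rule state_meas)
  note x = comp_fx[OF tI]
  have b: "(\<lambda>s. fst (ubd_state c w1 w2 s t) - w1 + w2) \<in> borel_measurable (PiM I (\<lambda>_. D \<Otimes>\<^sub>M measure_pmf p))"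
    by (intro borel_measurable_add borel_measurable_diff IH measurable_const) simp_all
  have f1: "(\<lambda>s. sgn_conv c (inner (fst (ubd_state c w1 w2 s t)) (fst (fst (s t))))) \<in> borel_measurable (PiM I (\<lambda>_. D \<Otimes>\<^sub>M measure_pmf p))"
    by (rule measurable_compose[OF borel_measurable_inner[OF IH x] sgn_conv_meas])
  have f2: "(\<lambda>s. sgn_conv c (inner (fst (ubd_state c w1 w2 s t) - w1 + w2) (fst (fst (s t))))) \<in> borel_measurable (PiM I (\<lambda>_. D \<Otimes>\<^sub>M measure_pmf p))"
    by (rule measurable_compose[OF borel_measurable_inner[OF b x] sgn_conv_meas])
  show ?thesis unfolding pred_def using borel_measurable_neq[OF f1 f2] by simp
qed

lemma updates_meas:
  "{..<n} \<subseteq> I \<Longrightarrow> (\<lambda>s. real (ubd_updates c w1 w2 s n)) \<in> borel_measurable (PiM I (\<lambda>_. D \<Otimes>\<^sub>M measure_pmf p))"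
  unfolding real_updates
proof (intro borel_measurable_sum)
  fix t assume a: "{..<n} \<subseteq> I" "t \<in> {..<n}"
  then have st: "{..<t} \<subseteq> I" by auto
  have tI: "t \<in> I" using a by auto
  show "(\<lambda>s. if sgn_conv c (inner (fst (ubd_state c w1 w2 s t)) (fst (fst (s t)))) \<noteq> sgn_conv c (inner (fst (ubd_state c w1 w2 s t) - w1 + w2) (fst (fst (s t)))) then 1 else 0 :: real) \<in> borel_measurable (PiM I (\<lambda>_. D \<Otimes>\<^sub>M measure_pmf p))"
    using dis_pred[OF st tI, of c w1 w2] by (intro measurable_If measurable_const) (simp_all add: pred_def)
qed

lemma Rf_meas: "{..<N} \<subseteq> I \<Longrightarrow> (\<lambda>s. ennreal (Rf c w1 w2 lam w kap s N)) \<in> borel_measurable (PiM I (\<lambda>_. D \<Otimes>\<^sub>M measure_pmf p))"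
proof -
  assume NI: "{..<N} \<subseteq> I"
  have a: "(\<lambda>s. fst (ubd_state c w1 w2 s N)) \<in> borel_measurable (PiM I (\<lambda>_. D \<Otimes>\<^sub>M measure_pmf p))"
    using NI by (rule state_meas)
  have u: "(\<lambda>s. real (ubd_updates c w1 w2 s N)) \<in> borel_measurable (PiM I (\<lambda>_. D \<Otimes>\<^sub>M measure_pmf p))"
    using NI by (rule updates_meas)
  have "(\<lambda>s. Rf c w1 w2 lam w kap s N) \<in> borel_measurable (PiM I (\<lambda>_. D \<Otimes>\<^sub>M measure_pmf p))"
    unfolding Rf_def by (intro borel_measurable_add Qf_meas borel_measurable_diff a measurable_const borel_measurable_times u) simp_all
  then show ?thesis by (rule measurable_compose[OF _ measurable_ennreal])
qed

lemma main_induct: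
  assumes pD: "prob_space D"
    and ae: "AE z in D. norm (fst z) \<le> 1 \<and> snd z \<in> {-1, 1}"
    and nul: "emeasure D {z. snd z * inner w (fst z) < 1} = 0"
    and mu: "0 \<le> \<mu>" "\<mu> < 1/2"
    and K: "K = max (norm w1) (norm w2)"
    and lam: "lam = (1 - 2*\<mu>) / (2*K+1)" and kap: "kap = (1 - 2*\<mu>)/2"
    and p: "p = flip_pmf \<mu>"
  shows "(\<integral>\<^sup>+ s. ennreal (Rf c w1 w2 lam w kap s n) \<partial>PiM {..<n} (\<lambda>_. D \<Otimes>\<^sub>M measure_pmf p)) \<le> ennreal (Qf lam w 0)"
proof (induction n)
  let ?M = "D \<Otimes>\<^sub>M measure_pmf p"
  have pM: "prob_space ?M" by (rule prob_space_pair[OF pD prob_space_measure_pmf])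
  case 0
  interpret PP: prob_space "PiM ({}::nat set) (\<lambda>_. ?M)" by (rule prob_space_PiM) (rule pM)
  show ?case by (simp add: Rf_def ubd_updates_def PP.emeasure_space_1)
next
  let ?M = "D \<Otimes>\<^sub>M measure_pmf p"
  have pM: "prob_space ?M" by (rule prob_space_pair[OF pD prob_space_measure_pmf])
  interpret PS: product_sigma_finite "\<lambda>_::nat. ?M"
    by (simp add: product_sigma_finite_def prob_space_imp_sigma_finite[OF pM])
  case (Suc n)
  have k0: "kap \<ge> 0" using kap mu by simp
  have [measurable]: "(\<lambda>s. fst (ubd_state c w1 w2 s (Suc n))) \<in> borel_measurable (PiM (insert n {..<n}) (\<lambda>_. ?M))"
    by (rule state_meas) auto
  have [measurable]: "(\<lambda>s. real (ubd_updates c w1 w2 s (Suc n))) \<in> borel_measurable (PiM (insert n {..<n}) (\<lambda>_. ?M))"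
    by (rule updates_meas) auto
  have meas: "(\<lambda>s. ennreal (Rf c w1 w2 lam w kap s (Suc n))) \<in> borel_measurable (PiM (insert n {..<n}) (\<lambda>_. ?M))"
    by (rule Rf_meas) auto
  have "(\<integral>\<^sup>+ s. ennreal (Rf c w1 w2 lam w kap s (Suc n)) \<partial>PiM {..<Suc n} (\<lambda>_. ?M))
      = (\<integral>\<^sup>+ x. \<integral>\<^sup>+ y. ennreal (Rf c w1 w2 lam w kap (x(n := y)) (Suc n)) \<partial>?M \<partial>PiM {..<n} (\<lambda>_. ?M))"
    unfolding lessThan_Suc by (rule PS.product_nn_integral_insert[OF _ _ meas]) auto
  also have "\<dots> \<le> (\<integral>\<^sup>+ x. ennreal (Rf c w1 w2 lam w kap x n) \<partial>PiM {..<n} (\<lambda>_. ?M))"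
  proof (rule nn_integral_mono)
    fix x :: "nat \<Rightarrow> ('a \<times> real) \<times> real"
    have eqs: "ubd_state c w1 w2 (x(n := y)) n = ubd_state c w1 w2 x n"
       "ubd_updates c w1 w2 (x(n := y)) n = ubd_updates c w1 w2 x n" for y
      by (auto intro!: ubd_local ubd_updates_local)
    have "(\<integral>\<^sup>+ y. ennreal (Rf c w1 w2 lam w kap (x(n := y)) (Suc n)) \<partial>?M)
        = (\<integral>\<^sup>+ y. ennreal (Gf c w1 w2 lam w kap (fst (ubd_state c w1 w2 x n) - w1) (real (ubd_updates c w1 w2 x n)) y) \<partial>?M)"
      unfolding Rf_Suc eqs by simp
    also have "\<dots> \<le> ennreal (Qf lam w (fst (ubd_state c w1 w2 x n) - w1) + kap * real (ubd_updates c w1 w2 x n))"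
      unfolding p by (rule inner_bound[OF pD ae nul mu K lam kap]) simp
    finally show "(\<integral>\<^sup>+ y. ennreal (Rf c w1 w2 lam w kap (x(n := y)) (Suc n)) \<partial>?M) \<le> ennreal (Rf c w1 w2 lam w kap x n)"
      by (simp add: Rf_def)
  qed
  also have "\<dots> \<le> ennreal (Qf lam w 0)" by (rule Suc.IH)
  finally show ?case .
qed

end


theorem theorem1:
  fixes D :: "('a::euclidean_space \<times> real) measure"
    and wstar w1 w2 :: 'a and \<mu> c :: real and N :: nat
  assumes "prob_space D"
    and "sets D = sets borel"
    and "AE z in D. norm (fst z) \<le> 1 \<and> snd z \<in> {-1, 1}"
    and "emeasure D {z. snd z * inner wstar (fst z) < 1} = 0"
    and "0 \<le> \<mu>" and "\<mu> < 1/2"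
  shows "(\<integral>\<^sup>+ s. ennreal (real (ubd_updates c w1 w2 s N))
            \<partial>(PiM {..<N} (\<lambda>_. D \<Otimes>\<^sub>M measure_pmf (flip_pmf \<mu>))))
         \<le> ennreal (3 * (4 * max (norm w1) (norm w2) + 1) / (1 - 2 * \<mu>)^2 * (norm wstar)^2)"
proof -
  define K where "K = max (norm w1) (norm w2)"
  define lam where "lam = (1 - 2*\<mu>) / (2*K+1)"
  define kap where "kap = (1 - 2*\<mu>)/2"
  let ?P = "PiM {..<N} (\<lambda>_. D \<Otimes>\<^sub>M measure_pmf (flip_pmf \<mu>))"
  have K0: "K \<ge> 0" unfolding K_def by (simp add: le_max_iff_disj)
  have lam0: "lam > 0" unfolding lam_def using K0 assms(5,6) by simp
  have kap0: "kap > 0" unfolding kap_def using assms(5,6) by simp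
  have main: "(\<integral>\<^sup>+ s. ennreal (Rf c w1 w2 lam wstar kap s N) \<partial>?P) \<le> ennreal (Qf lam wstar 0)"
    by (rule main_induct[OF assms(2) assms(1) assms(3) assms(4) assms(5,6) K_def lam_def kap_def refl])
  have mR: "(\<lambda>s. ennreal (Rf c w1 w2 lam wstar kap s N)) \<in> borel_measurable ?P"
    by (rule Rf_meas[OF assms(2)]) simp
  have "(\<integral>\<^sup>+ s. ennreal (real (ubd_updates c w1 w2 s N)) \<partial>?P)
      \<le> (\<integral>\<^sup>+ s. ennreal (1/kap) * ennreal (Rf c w1 w2 lam wstar kap s N) \<partial>?P)"
  proof (rule nn_integral_mono)
    fix s
    have "kap * real (ubd_updates c w1 w2 s N) \<le> Rf c w1 w2 lam wstar kap s N"
      unfolding Rf_def using Qf_nonneg[OF lam0] by (simp add: add_increasing)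
    hence "real (ubd_updates c w1 w2 s N) \<le> 1/kap * Rf c w1 w2 lam wstar kap s N"
      using kap0 by (simp add: field_simps)
    then show "ennreal (real (ubd_updates c w1 w2 s N)) \<le> ennreal (1/kap) * ennreal (Rf c w1 w2 lam wstar kap s N)"
    proof -
      have R0: "Rf c w1 w2 lam wstar kap s N \<ge> 0" unfolding Rf_def using Qf_nonneg[OF lam0] kap0 by (intro add_nonneg_nonneg mult_nonneg_nonneg) auto
      have "ennreal (1/kap) * ennreal (Rf c w1 w2 lam wstar kap s N) = ennreal (1/kap * Rf c w1 w2 lam wstar kap s N)"
        using kap0 R0 by (intro ennreal_mult[symmetric]) auto
      with \<open>real (ubd_updates c w1 w2 s N) \<le> 1/kap * Rf c w1 w2 lam wstar kap s N\<close> show ?thesis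
        by (simp add: ennreal_leI)
    qed
  qed
  also have "\<dots> = ennreal (1/kap) * (\<integral>\<^sup>+ s. ennreal (Rf c w1 w2 lam wstar kap s N) \<partial>?P)"
    by (rule nn_integral_cmult[OF mR])
  also have "\<dots> \<le> ennreal (1/kap) * ennreal (Qf lam wstar 0)"
    by (rule mult_left_mono[OF main]) simp
  also have "\<dots> = ennreal (1/kap * Qf lam wstar 0)"
    using kap0 Qf_nonneg[OF lam0, of wstar 0] by (intro ennreal_mult[symmetric]) auto
  also have "\<dots> \<le> ennreal (3 * (4 * max (norm w1) (norm w2) + 1) / (1 - 2 * \<mu>)^2 * (norm wstar)^2)"
  proof (rule ennreal_leI)
    have e: "1/kap * Qf lam wstar 0 = (2*K+1) / (1 - 2*\<mu>)^2 * (norm wstar)^2"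
    proof -
      define e where "e = 1 - 2*\<mu>"
      have e0: "e > 0" unfolding e_def using assms(6) by simp
      have "1/kap * Qf lam wstar 0 = (norm wstar)^2 / (e * (e / (2*K+1)))"
        unfolding Qf_def kap_def lam_def e_def[symmetric] using e0 K0 by (simp add: field_simps)
      also have "\<dots> = (2*K+1) / e^2 * (norm wstar)^2"
        using e0 K0 by (simp add: field_simps power2_eq_square)
      finally show ?thesis unfolding e_def .
    qed
    have "(2*K+1) / (1 - 2*\<mu>)^2 \<le> 3 * (4 * K + 1) / (1 - 2 * \<mu>)^2"
      using K0 by (intro divide_right_mono) auto
    hence "(2*K+1) / (1 - 2*\<mu>)^2 * (norm wstar)^2 \<le> 3 * (4 * K + 1) / (1 - 2 * \<mu>)^2 * (norm wstar)^2"
      by (rule mult_right_mono) simp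
    thus "1/kap * Qf lam wstar 0 \<le> 3 * (4 * max (norm w1) (norm w2) + 1) / (1 - 2 * \<mu>)^2 * (norm wstar)^2"
      unfolding e K_def .
  qed
  finally show ?thesis .
qed

end
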